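(* Let $t$ be a positive integer, let $M$ be a matroid with the $(t,2t)$-property, and let $(S_1,\ldots, S_n)$ be a $t$-echidna of $M$ with $n\geq3t-1$. Let $I$ be a $(t-1)$-element subset of $\{1,\dots,n\}$. Then for every $z\in E(M)-\bigcup_{i \in I}S_i$, there is a $2t$-element circuit of $M$ and a $2t$-element cocircuit of $M$ each containing $\{z\} \cup \bigcup_{i \in I}S_i$.
   Context: A matroid $M$ has the $(t,2t)$-property if every $t$-element subset of $E(M)$ is contained in both a $2t$-element circuit and a $2t$-element cocircuit of $M$. A $t$-echidna of order $n$ of $M$ is a partition $(S_1,\ldots,S_n)$ of a subset of $E(M)$ such that $|S_i|=2$ for all $i\in\{1,\dots,n\}$, and $\bigcup_{i\in I}S_i$ is a circuit of $M$ for every $I\subseteq\{1,\dots,n\}$ with $|I|=t$. *)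

theory Defs
  imports Main
begin

definition matroid :: "'a set \<Rightarrow> ('a set \<Rightarrow> bool) \<Rightarrow> bool" where
  "matroid E indep \<longleftrightarrow>
     finite E \<and>
     (\<forall>X. indep X \<longrightarrow> X \<subseteq> E) \<and>
     indep {} \<and>
     (\<forall>X Y. indep Y \<and> X \<subseteq> Y \<longrightarrow> indep X) \<and>
     (\<forall>X Y. indep X \<and> indep Y \<and> card X < card Y \<longrightarrow>
        (\<exists>y\<in>Y - X. indep (insert y X)))"

definition circuit :: "'a set \<Rightarrow> ('a set \<Rightarrow> bool) \<Rightarrow> 'a set \<Rightarrow> bool" where
  "circuit E indep C \<longleftrightarrow> C \<subseteq> E \<and> \<not> indep C \<and> (\<forall>X. X \<subset> C \<longrightarrow> indep X)"

definition basis :: "'a set \<Rightarrow> ('a set \<Rightarrow> bool) \<Rightarrow> 'a set \<Rightarrow> bool" where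
  "basis E indep B \<longleftrightarrow> indep B \<and> (\<forall>X. indep X \<and> B \<subseteq> X \<longrightarrow> X = B)"

definition dual_indep :: "'a set \<Rightarrow> ('a set \<Rightarrow> bool) \<Rightarrow> 'a set \<Rightarrow> bool" where
  "dual_indep E indep X \<longleftrightarrow> X \<subseteq> E \<and> (\<exists>B. basis E indep B \<and> X \<subseteq> E - B)"

definition cocircuit :: "'a set \<Rightarrow> ('a set \<Rightarrow> bool) \<Rightarrow> 'a set \<Rightarrow> bool" where
  "cocircuit E indep C \<longleftrightarrow> circuit E (dual_indep E indep) C"

definition tt_property :: "'a set \<Rightarrow> ('a set \<Rightarrow> bool) \<Rightarrow> nat \<Rightarrow> bool" where
  "tt_property E indep t \<longleftrightarrow>
     (\<forall>X. X \<subseteq> E \<and> card X = t \<longrightarrow>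
        (\<exists>C. circuit E indep C \<and> card C = 2 * t \<and> X \<subseteq> C) \<and>
        (\<exists>D. cocircuit E indep D \<and> card D = 2 * t \<and> X \<subseteq> D))"

definition echidna :: "'a set \<Rightarrow> ('a set \<Rightarrow> bool) \<Rightarrow> nat \<Rightarrow> (nat \<Rightarrow> 'a set) \<Rightarrow> nat \<Rightarrow> bool" where
  "echidna E indep t S n \<longleftrightarrow>
     (\<forall>i\<in>{1..n}. S i \<subseteq> E \<and> card (S i) = 2) \<and>
     (\<forall>i\<in>{1..n}. \<forall>j\<in>{1..n}. i \<noteq> j \<longrightarrow> S i \<inter> S j = {}) \<and>
     (\<forall>J. J \<subseteq> {1..n} \<and> card J = t \<longrightarrow> circuit E indep (\<Union>i\<in>J. S i))"

end

theory Submission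
  imports Defs
begin

lemma indep_sub_E: "matroid E indep \<Longrightarrow> indep X \<Longrightarrow> X \<subseteq> E"
  unfolding matroid_def by blast

lemma indep_finite: "matroid E indep \<Longrightarrow> indep X \<Longrightarrow> finite X"
  unfolding matroid_def by (meson finite_subset)

lemma indep_mono: "matroid E indep \<Longrightarrow> indep Y \<Longrightarrow> X \<subseteq> Y \<Longrightarrow> indep X"
  unfolding matroid_def by blast

lemma indep_aug: "matroid E indep \<Longrightarrow> indep X \<Longrightarrow> indep Y \<Longrightarrow> card X < card Y \<Longrightarrow>
    \<exists>y\<in>Y - X. indep (insert y X)"
  unfolding matroid_def by blast

lemma basis_card_ge:
  assumes m: "matroid E indep" and b: "basis E indep B" and x: "indep X"
  shows "card X \<le> card B"
proof (rule ccontr)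
  assume "\<not> card X \<le> card B"
  then have "card B < card X" by simp
  moreover have "indep B" using b unfolding basis_def by blast
  ultimately obtain y where "y \<in> X - B" "indep (insert y B)" using indep_aug[OF m _ x] by blast
  then show False using b unfolding basis_def by blast
qed

lemma indep_card_basis:
  assumes m: "matroid E indep" and b: "basis E indep B" and x: "indep X" and c: "card X = card B"
  shows "basis E indep X"
  unfolding basis_def
proof (intro conjI allI impI)
  show "indep X" by fact
  fix Y assume "indep Y \<and> X \<subseteq> Y"
  then show "Y = X" using basis_card_ge[OF m b, of Y] c indep_finite[OF m, of Y]
    by (metis card_seteq)
qed

lemma orth:
  assumes m: "matroid E indep" and c: "circuit E indep C" and d: "cocircuit E indep D"
    and ce: "C \<inter> D = {e}"
  shows False
proof -
  have eC: "e \<in> C" and eD: "e \<in> D" using ce by auto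
  have DE: "D \<subseteq> E" and ndD: "\<not> dual_indep E indep D"
    and pD: "\<And>X. X \<subset> D \<Longrightarrow> dual_indep E indep X"
    using d unfolding cocircuit_def circuit_def by auto
  have "dual_indep E indep (D - {e})" using pD eD by blast
  then obtain B where B: "basis E indep B" and DB: "D - {e} \<subseteq> E - B"
    unfolding dual_indep_def by blast
  have meet: "\<And>B'. basis E indep B' \<Longrightarrow> \<not> D \<subseteq> E - B'"
    using ndD DE unfolding dual_indep_def by blast
  have eB: "e \<in> B" using meet[OF B] DB DE by auto
  have iC: "indep (C - {e})" using c eC unfolding circuit_def by blast
  have nC: "\<not> indep C" using c unfolding circuit_def by blast
  define A where "A = (B - {e}) \<union> (C - {e})"
  have AD: "A \<inter> D = {}" using DB ce unfolding A_def by blast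
  define P where "P = (\<lambda>X. indep X \<and> C - {e} \<subseteq> X \<and> X \<subseteq> A)"
  have "P (C - {e})" unfolding P_def A_def using iC by blast
  moreover have "\<forall>y. P y \<longrightarrow> card y < card E + 1"
  proof (intro allI impI)
    fix y assume "P y"
    then have "y \<subseteq> E" using indep_sub_E[OF m] unfolding P_def by blast
    then show "card y < card E + 1" using m unfolding matroid_def
      by (simp add: card_mono le_imp_less_Suc)
  qed
  ultimately obtain M where PM: "P M" and Mmax: "\<forall>y. P y \<longrightarrow> card y \<le> card M"
    using Lattices_Big.ex_has_greatest_nat[of P "C - {e}" card "card E + 1"] by blast
  have iM: "indep M" and CM: "C - {e} \<subseteq> M" and MA: "M \<subseteq> A" using PM unfolding P_def by auto
  have fM: "finite M" using indep_finite[OF m iM] .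
  have iB: "indep B" using B unfolding basis_def by blast
  have "\<not> card M < card B"
  proof
    assume "card M < card B"
    then obtain y where y: "y \<in> B - M" "indep (insert y M)" using indep_aug[OF m iM iB] by blast
    show False
    proof (cases "y = e")
      case True
      then have "C \<subseteq> insert y M" using CM by blast
      then show False using indep_mono[OF m y(2)] nC by blast
    next
      case False
      then have "P (insert y M)" using y CM MA unfolding P_def A_def by blast
      then have "card (insert y M) \<le> card M" using Mmax by blast
      then show False using y fM by simp
    qed
  qed
  then have "card M = card B" using basis_card_ge[OF m B iM] by simp
  then have bM: "basis E indep M" using indep_card_basis[OF m B iM] by simp
  have "D \<subseteq> E - M" using DE AD MA by blast
  then show False using meet[OF bM] by blast
qed


lemma avoid:
  fixes S :: "nat \<Rightarrow> 'a set"
  assumes fD: "finite D" and cD: "card D = 2*t" and i: "i \<in> {1..n}" and si: "S i \<inter> D = {s}"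
    and disj: "\<forall>i\<in>{1..n}. \<forall>j\<in>{1..n}. i \<noteq> j \<longrightarrow> S i \<inter> S j = {}"
    and nn: "n \<ge> 3*t-1" and t: "0 < t"
  shows "\<exists>J'. J' \<subseteq> {1..n} - {i} \<and> card J' = t-1 \<and> (\<forall>j\<in>J'. S j \<inter> D = {})"
proof -
  define K where "K = {j \<in> {1..n} - {i}. S j \<inter> D = {}}"
  define L where "L = {1..n} - {i} - K"
  define f where "f = (\<lambda>j. SOME x. x \<in> S j \<inter> D)"
  have fL: "\<And>j. j \<in> L \<Longrightarrow> f j \<in> S j \<inter> D"
  proof -
    fix j assume "j \<in> L"
    then have "S j \<inter> D \<noteq> {}" unfolding L_def K_def by blast
    then show "f j \<in> S j \<inter> D" unfolding f_def by (metis ex_in_conv someI)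
  qed
  have inj: "inj_on f L"
  proof (rule inj_onI)
    fix j k assume jk: "j \<in> L" "k \<in> L" "f j = f k"
    then have "S j \<inter> S k \<noteq> {}" using fL[of j] fL[of k] by auto
    moreover have "j \<in> {1..n}" "k \<in> {1..n}" using jk unfolding L_def by auto
    ultimately show "j = k" using disj by blast
  qed
  have im: "f ` L \<subseteq> D - {s}"
  proof
    fix x assume "x \<in> f ` L"
    then obtain j where j: "j \<in> L" "x = f j" by blast
    then have "j \<noteq> i" "j \<in> {1..n}" unfolding L_def by auto
    then have "S j \<inter> S i = {}" using disj i by blast
    then show "x \<in> D - {s}" using fL[OF j(1)] j si by blast
  qed
  have "card L = card (f ` L)" using inj by (simp add: card_image)
  also have "\<dots> \<le> card (D - {s})" using im fD by (simp add: card_mono)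
  also have "\<dots> = 2*t - 1"
  proof -
    have "s \<in> D" using si by blast
    then show ?thesis using cD fD by (simp add: card_Diff_singleton)
  qed
  finally have cL: "card L \<le> 2*t - 1" .
  have "card ({1..n} - {i}) = n - 1" using i by simp
  moreover have "{1..n} - {i} = K \<union> L" "K \<inter> L = {}" unfolding L_def K_def by auto
  moreover have "finite K" "finite L" unfolding L_def K_def by auto
  ultimately have "card K + card L = n - 1" by (metis card_Un_disjoint)
  then have "t - 1 \<le> card K" using cL nn t by linarith
  then obtain J' where "J' \<subseteq> K" "card J' = t - 1" by (meson obtain_subset_with_card_n)
  then show ?thesis unfolding K_def by blast
qed

context
  fixes E :: "'a set" and indep :: "'a set \<Rightarrow> bool" and t n :: nat
    and S :: "nat \<Rightarrow> 'a set"
  assumes t: "0 < t"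
    and m: "matroid E indep"
    and tt: "tt_property E indep t"
    and ech: "echidna E indep t S n"
    and nn: "n \<ge> 3 * t - 1"
begin

lemma disj: "\<forall>i\<in>{1..n}. \<forall>j\<in>{1..n}. i \<noteq> j \<longrightarrow> S i \<inter> S j = {}"
  using ech unfolding echidna_def by blast

lemma SE: "i \<in> {1..n} \<Longrightarrow> S i \<subseteq> E"
  using ech unfolding echidna_def by blast

lemma S2: "i \<in> {1..n} \<Longrightarrow> card (S i) = 2"
  using ech unfolding echidna_def by blast

lemma U_circ: "J \<subseteq> {1..n} \<Longrightarrow> card J = t \<Longrightarrow> circuit E indep (\<Union>i\<in>J. S i)"
  using ech unfolding echidna_def by blast

lemma finE: "finite E" using m unfolding matroid_def by blast

lemma card_U: "J \<subseteq> {1..n} \<Longrightarrow> card (\<Union>i\<in>J. S i) = 2 * card J"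
proof -
  assume J: "J \<subseteq> {1..n}"
  have "finite J" using J finite_subset by blast
  moreover have "\<forall>i\<in>J. finite (S i)" using J S2 by (metis card.infinite subsetD zero_neq_numeral)
  moreover have "\<forall>i\<in>J. \<forall>j\<in>J. i \<noteq> j \<longrightarrow> S i \<inter> S j = {}" using J disj by blast
  ultimately have "card (\<Union>i\<in>J. S i) = (\<Sum>i\<in>J. card (S i))" by (rule card_UN_disjoint)
  also have "\<dots> = (\<Sum>i\<in>J. 2)" using J S2 by (intro sum.cong) auto
  finally show ?thesis by simp
qed

lemma single_meet:
  assumes i: "i \<in> {1..n}" and x: "x \<in> S i \<inter> D" and ns: "\<not> S i \<subseteq> D"
  shows "S i \<inter> D = {x}"
proof -
  obtain a b where "S i = {a,b}" "a \<noteq> b" using S2[OF i] by (meson card_2_iff)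
  then show ?thesis using x ns by auto
qed

lemma meet_J:
  assumes fD: "finite D" and cD: "card D = 2*t" and i: "i \<in> {1..n}" and x: "x \<in> S i \<inter> D"
    and ns: "\<not> S i \<subseteq> D"
  obtains J where "J \<subseteq> {1..n}" "card J = t" "(\<Union>j\<in>J. S j) \<inter> D = {x}"
proof -
  have si: "S i \<inter> D = {x}" using single_meet[OF i x ns] .
  obtain J' where J': "J' \<subseteq> {1..n} - {i}" "card J' = t-1" "\<forall>j\<in>J'. S j \<inter> D = {}"
    using avoid[OF fD cD i si disj nn t] by blast
  have fJ': "finite J'" using J' finite_subset by blast
  have "insert i J' \<subseteq> {1..n}" using J' i by blast
  moreover have "i \<notin> J'" using J'(1) by blast
  then have "card (insert i J') = t" using J'(2) fJ' t by simp
  moreover have "(\<Union>j\<in>insert i J'. S j) \<inter> D = {x}" using si J'(3) by blast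
  ultimately show ?thesis using that by blast
qed

lemma cocirc_contains:
  assumes D: "cocircuit E indep D" and cD: "card D = 2*t" and i: "i \<in> {1..n}" and x: "x \<in> S i \<inter> D"
  shows "S i \<subseteq> D"
proof (rule ccontr)
  assume ns: "\<not> S i \<subseteq> D"
  have "D \<subseteq> E" using D unfolding cocircuit_def circuit_def by blast
  then have fD: "finite D" using finE finite_subset by blast
  obtain J where "J \<subseteq> {1..n}" "card J = t" "(\<Union>j\<in>J. S j) \<inter> D = {x}"
    using meet_J[OF fD cD i x ns] by blast
  then show False using orth[OF m U_circ D] by blast
qed

lemma tt_both: "Y \<subseteq> E \<Longrightarrow> card Y = t \<Longrightarrow>
   (\<exists>C. circuit E indep C \<and> card C = 2 * t \<and> Y \<subseteq> C) \<and>
   (\<exists>D. cocircuit E indep D \<and> card D = 2 * t \<and> Y \<subseteq> D)"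
  using tt unfolding tt_property_def by simp

definition rep :: "nat \<Rightarrow> 'a" where "rep j = (SOME x. x \<in> S j)"

lemma rep_in: "j \<in> {1..n} \<Longrightarrow> rep j \<in> S j"
proof -
  assume j: "j \<in> {1..n}"
  then have "S j \<noteq> {}" using S2 by fastforce
  then show ?thesis unfolding rep_def by (metis ex_in_conv someI)
qed

lemma rep_inj: "J \<subseteq> {1..n} \<Longrightarrow> inj_on rep J"
proof (rule inj_onI)
  fix j k assume J: "J \<subseteq> {1..n}" and jk: "j \<in> J" "k \<in> J" "rep j = rep k"
  have jn: "j \<in> {1..n}" "k \<in> {1..n}" using J jk by auto
  have "rep j \<in> S j \<inter> S k" using rep_in[OF jn(1)] rep_in[OF jn(2)] jk(3) by simp
  then show "j = k" using disj jn by blast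
qed

lemma CoE:
  assumes J: "J \<subseteq> {1..n}" and cJ: "card J = t"
  shows "cocircuit E indep (\<Union>i\<in>J. S i)"
proof -
  have RE: "rep ` J \<subseteq> E" using rep_in SE J by blast
  have RC: "card (rep ` J) = t" using rep_inj[OF J] cJ by (simp add: card_image)
  obtain D where D: "cocircuit E indep D" "card D = 2 * t" "rep ` J \<subseteq> D"
    using tt_both[OF RE RC] by meson
  have sub: "(\<Union>i\<in>J. S i) \<subseteq> D"
  proof
    fix y assume "y \<in> (\<Union>i\<in>J. S i)"
    then obtain i where i: "i \<in> J" "y \<in> S i" by blast
    have "rep i \<in> S i \<inter> D" using rep_in[of i] i J D(3) by blast
    then have "S i \<subseteq> D" using cocirc_contains[OF D(1) D(2)] i J by blast
    then show "y \<in> D" using i by blast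
  qed
  have "D \<subseteq> E" using D unfolding cocircuit_def circuit_def by blast
  then have fD: "finite D" using finE finite_subset by blast
  have "card (\<Union>i\<in>J. S i) = 2 * t" using card_U[OF J] cJ by simp
  then have "(\<Union>i\<in>J. S i) = D" using card_seteq[OF fD sub] D(2) by simp
  then show ?thesis using D(1) by simp
qed

lemma circ_contains:
  assumes C: "circuit E indep C" and cC: "card C = 2*t" and i: "i \<in> {1..n}" and x: "x \<in> S i \<inter> C"
  shows "S i \<subseteq> C"
proof (rule ccontr)
  assume ns: "\<not> S i \<subseteq> C"
  have "C \<subseteq> E" using C unfolding circuit_def by blast
  then have fC: "finite C" using finE finite_subset by blast
  obtain J where J: "J \<subseteq> {1..n}" "card J = t" "(\<Union>j\<in>J. S j) \<inter> C = {x}"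
    using meet_J[OF fC cC i x ns] by blast
  then have "C \<inter> (\<Union>j\<in>J. S j) = {x}" by blast
  then show False using orth[OF m C CoE[OF J(1) J(2)]] by blast
qed

lemma main:
  assumes I: "I \<subseteq> {1..n}" and cI: "card I = t - 1"
  shows "\<forall>z \<in> E - (\<Union>i\<in>I. S i).
           (\<exists>C. circuit E indep C \<and> card C = 2 * t \<and> insert z (\<Union>i\<in>I. S i) \<subseteq> C) \<and>
           (\<exists>D. cocircuit E indep D \<and> card D = 2 * t \<and> insert z (\<Union>i\<in>I. S i) \<subseteq> D)"
proof
  fix z assume z: "z \<in> E - (\<Union>i\<in>I. S i)"
  define Y where "Y = insert z (rep ` I)"
  have repI: "\<And>i. i \<in> I \<Longrightarrow> rep i \<in> S i" using rep_in I by blast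
  have "z \<notin> rep ` I" using z repI by blast
  moreover have "finite I" using I finite_subset by blast
  ultimately have "card Y = card (rep ` I) + 1" unfolding Y_def by simp
  also have "card (rep ` I) = t - 1" using rep_inj[OF I] cI by (simp add: card_image)
  finally have cY: "card Y = t" using t by simp
  have YE: "Y \<subseteq> E" unfolding Y_def using z repI SE I by blast
  obtain C where C: "circuit E indep C" "card C = 2 * t" "Y \<subseteq> C"
    using tt_both[OF YE cY] by meson
  obtain D where D: "cocircuit E indep D" "card D = 2 * t" "Y \<subseteq> D"
    using tt_both[OF YE cY] by meson
  have "insert z (\<Union>i\<in>I. S i) \<subseteq> C"
  proof -
    have "\<And>i. i \<in> I \<Longrightarrow> S i \<subseteq> C"
    proof -
      fix i assume i: "i \<in> I"
      then have "rep i \<in> S i \<inter> C" using repI C(3) unfolding Y_def by blast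
      then show "S i \<subseteq> C" using circ_contains[OF C(1) C(2)] i I by blast
    qed
    then show ?thesis using C(3) unfolding Y_def by blast
  qed
  moreover have "insert z (\<Union>i\<in>I. S i) \<subseteq> D"
  proof -
    have "\<And>i. i \<in> I \<Longrightarrow> S i \<subseteq> D"
    proof -
      fix i assume i: "i \<in> I"
      then have "rep i \<in> S i \<inter> D" using repI D(3) unfolding Y_def by blast
      then show "S i \<subseteq> D" using cocirc_contains[OF D(1) D(2)] i I by blast
    qed
    then show ?thesis using D(3) unfolding Y_def by blast
  qed
  ultimately show "(\<exists>C. circuit E indep C \<and> card C = 2 * t \<and> insert z (\<Union>i\<in>I. S i) \<subseteq> C) \<and>
           (\<exists>D. cocircuit E indep D \<and> card D = 2 * t \<and> insert z (\<Union>i\<in>I. S i) \<subseteq> D)"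
    using C D by blast
qed

end


theorem lemma4p4:
  fixes E :: "'a set" and indep :: "'a set \<Rightarrow> bool" and t n :: nat
    and S :: "nat \<Rightarrow> 'a set" and I :: "nat set"
  assumes "0 < t"
    and "matroid E indep"
    and "tt_property E indep t"
    and "echidna E indep t S n"
    and "n \<ge> 3 * t - 1"
    and "I \<subseteq> {1..n}" and "card I = t - 1"
  shows "\<forall>z \<in> E - (\<Union>i\<in>I. S i).
           (\<exists>C. circuit E indep C \<and> card C = 2 * t \<and> insert z (\<Union>i\<in>I. S i) \<subseteq> C) \<and>
           (\<exists>D. cocircuit E indep D \<and> card D = 2 * t \<and> insert z (\<Union>i\<in>I. S i) \<subseteq> D)"
  using main[OF assms] .

end
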